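(* Let $R\in(0,\pi)$, let $\Omega_R\subset\mathbb{S}^2$ be the closed spherical cap of geodesic radius $R$ centered at the north pole, and $$\mathfrak{C}_{\Omega_R}=\{u\colon\overline{\Omega_R}\to [0,\infty) \;:\; u|_{\partial\Omega_R}=0,\ u \text{ piecewise } C^1\}.$$ Then $\inf\{R_2[u]\colon u\in\mathfrak{C}_{\Omega_R}\}=0$. Consequently, $R_2$ has no minimizer in $\mathfrak{C}_{\Omega_R}$.
   Context: For a function $u$ on a domain $\Omega\subset\mathbb{S}^2$ (describing the radial graph $\{e^{u(\xi)}\xi:\xi\in\Omega\}$), with $\nabla_{\mathbb{S}^2}$ the gradient for the round metric and $d\Omega$ the round area element, the (incompressible source flow) resistance functional is $$R_2[u]=\int_{\Omega}\frac{e^{-2u}}{1+|\nabla_{\mathbb{S}^2}u|^2}\,d\Omega.$$ *)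

theory Defs
  imports "HOL-Analysis.Analysis"
begin

text \<open>The unit sphere S^2 is modelled as sphere (0::real^3) 1. A function on (a subset of)
the sphere is modelled as u :: real^3 => real; only its values on the sphere matter.\<close>

definition north :: "real^3" where
  "north = axis 3 1"

definition sph_dist :: "real^3 \<Rightarrow> real^3 \<Rightarrow> real" where
  "sph_dist \<xi> \<eta> = arccos (\<xi> \<bullet> \<eta>)"

definition cap :: "real \<Rightarrow> (real^3) set" where
  "cap R = {\<xi> \<in> sphere 0 1. sph_dist north \<xi> \<le> R}"

definition open_cap :: "real \<Rightarrow> (real^3) set" where
  "open_cap R = {\<xi> \<in> sphere 0 1. sph_dist north \<xi> < R}"

definition cap_boundary :: "real \<Rightarrow> (real^3) set" where
  "cap_boundary R = {\<xi> \<in> sphere 0 1. sph_dist north \<xi> = R}"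

text \<open>For \<xi> on the sphere, the Euclidean gradient of this extension at \<xi> is exactly the
round (tangential) gradient of u at \<xi>.\<close>
definition hom0 :: "(real^3 \<Rightarrow> real) \<Rightarrow> real^3 \<Rightarrow> real" where
  "hom0 u = (\<lambda>x. u (x /\<^sub>R norm x))"

definition sgrad_norm :: "(real^3 \<Rightarrow> real) \<Rightarrow> real^3 \<Rightarrow> real" where
  "sgrad_norm u \<xi> = onorm (frechet_derivative (hom0 u) (at \<xi>))"

definition open_cone :: "(real^3) set \<Rightarrow> (real^3) set" where
  "open_cone A = {x. x \<noteq> 0 \<and> x /\<^sub>R norm x \<in> A}"

definition ball_sector :: "(real^3) set \<Rightarrow> (real^3) set" where
  "ball_sector A = {x. 0 < norm x \<and> norm x \<le> 1 \<and> x /\<^sub>R norm x \<in> A}"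

text \<open>Integral w.r.t. the round area element of S^2 (nonnegative integrands, value in
[0,\<infinity>]): \<integral>_A f d\<Omega> = 3 \<integral>_{sector over A} f(x/|x|) dx, since the sector
integral equals (\<integral>_0^1 r^2 dr) (\<integral>_A f d\<Omega>).\<close>
definition sphere_nn_integral :: "(real^3) set \<Rightarrow> (real^3 \<Rightarrow> real) \<Rightarrow> ennreal" where
  "sphere_nn_integral A f = 3 * (\<integral>\<^sup>+ x \<in> ball_sector A. ennreal (f (x /\<^sub>R norm x)) \<partial>lborel)"

definition R2 :: "real \<Rightarrow> (real^3 \<Rightarrow> real) \<Rightarrow> ennreal" where
  "R2 R u = sphere_nn_integral (cap R)
     (\<lambda>\<xi>. exp (- 2 * u \<xi>) / (1 + (sgrad_norm u \<xi>)\<^sup>2))"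

text \<open>Piecewise C^1 on the closed cap: continuous on the closed cap, and continuously
differentiable (in the round sense) on the open cap off a closed exceptional set of zero
area (the union of the interfaces between the pieces / singular points).\<close>
definition piecewise_C1_cap :: "real \<Rightarrow> (real^3 \<Rightarrow> real) \<Rightarrow> bool" where
  "piecewise_C1_cap R u \<longleftrightarrow>
     continuous_on (cap R) u \<and>
     (\<exists>Z. closed Z \<and> Z \<subseteq> sphere 0 1 \<and> negligible (open_cone Z) \<and>
        (\<exists>g :: real^3 \<Rightarrow> real^3.
           (\<forall>x \<in> open_cone (open_cap R - Z). (hom0 u has_derivative (\<lambda>h. g x \<bullet> h)) (at x)) \<and>
           continuous_on (open_cone (open_cap R - Z)) g))"

definition admissible :: "real \<Rightarrow> (real^3 \<Rightarrow> real) set" where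
  "admissible R = {u. (\<forall>\<xi> \<in> cap R. 0 \<le> u \<xi>) \<and> (\<forall>\<xi> \<in> cap_boundary R. u \<xi> = 0)
                      \<and> piecewise_C1_cap R u}"

end

theory Submission
  imports Defs
begin

lemma norm_north[simp]: "norm north = 1"
  by (simp add: north_def)

lemma inner_north_le: "norm (\<xi>::real^3) = 1 \<Longrightarrow> \<bar>north \<bullet> \<xi>\<bar> \<le> 1"
  using Cauchy_Schwarz_ineq2[of north \<xi>] by simp

lemma inner_north_eq1: "norm (\<xi>::real^3) = 1 \<Longrightarrow> north \<bullet> \<xi> = 1 \<Longrightarrow> \<xi> = north"
proof -
  assume a: "norm \<xi> = 1" "north \<bullet> \<xi> = 1"
  have "\<xi> \<bullet> \<xi> = 1" "north \<bullet> north = 1" using a(1)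
    by (simp_all add: norm_eq_1[symmetric])
  then have "(norm (\<xi> - north))\<^sup>2 = 0"
    using a by (simp add: power2_norm_eq_inner inner_diff_left inner_diff_right inner_commute)
  then show ?thesis by simp
qed

lemma ray_sub: "open_cone {north} \<subseteq> span {north}"
  proof
    fix x assume "x \<in> open_cone {north}"
    then have "x /\<^sub>R norm x = north" "x \<noteq> 0" unfolding open_cone_def by auto
    then have "norm x *\<^sub>R north = norm x *\<^sub>R (x /\<^sub>R norm x)" by simp
    also have "\<dots> = x" using \<open>x \<noteq> 0\<close> by simp
    finally have "x = norm x *\<^sub>R north" by simp
    then show "x \<in> span {north}" by (metis span_base span_scale singletonI)
  qed

lemma span_null: "span {north} \<in> null_sets lborel"
proof -
  have "dim (span {north}) < DIM(real^3)" by (simp add: dim_span)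
  then have "negligible (span {north})" by (rule negligible_lowdim)
  then show "span {north} \<in> null_sets lborel"
    by (simp add: negligible_iff_null_sets null_sets_completion_iff closed_span borel_closed)
qed

lemma AE_not_ray: "AE x in lborel. x \<notin> open_cone {north}"
  using AE_not_in[OF span_null] ray_sub by auto

definition tt :: "real^3 \<Rightarrow> real" where "tt y = (north \<bullet> y) / norm y"
definition vv :: "real^3 \<Rightarrow> real^3" where
  "vv y = north /\<^sub>R norm y - ((north \<bullet> y) / norm y ^ 3) *\<^sub>R y"
definition gg :: "real \<Rightarrow> real^3 \<Rightarrow> real^3" where
  "gg c y = (c / sqrt (1 - (tt y)\<^sup>2)) *\<^sub>R vv y"
definition uc :: "real \<Rightarrow> real \<Rightarrow> real^3 \<Rightarrow> real" where
  "uc R c = (\<lambda>\<xi>. c * (R - sph_dist north \<xi>))"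

lemma hom0_uc: "hom0 (uc R c) = (\<lambda>y. c * (R - arccos (tt y)))"
  by (rule ext) (simp add: hom0_def uc_def sph_dist_def tt_def divide_inverse_commute)

lemma tt_deriv: "y \<noteq> 0 \<Longrightarrow> (tt has_derivative (\<lambda>h. vv y \<bullet> h)) (at y)"
  unfolding tt_def[abs_def]
  apply (rule has_derivative_eq_rhs)
   apply (rule derivative_eq_intros has_derivative_norm | assumption | simp)+
  apply (rule ext)
  apply (simp add: vv_def inner_diff_left inner_scaleR_left sgn_div_norm)
  apply (simp add: field_simps power3_eq_cube inner_commute)
  done

lemma uc_deriv:
  assumes "y \<noteq> 0" "-1 < tt y" "tt y < 1"
  shows "(hom0 (uc R c) has_derivative (\<lambda>h. gg c y \<bullet> h)) (at y)"
proof -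
  have a0: "(arccos has_derivative (*) (inverse (- sqrt (1 - (tt y)\<^sup>2)))) (at (tt y))"
    using DERIV_arccos[OF assms(2,3)] unfolding has_field_derivative_def .
  have a: "(arccos has_derivative (\<lambda>x. x * inverse (- sqrt (1 - (tt y)\<^sup>2)))) (at (tt y))"
    by (rule has_derivative_eq_rhs[OF a0]) (rule ext, simp only: mult.commute)
  have "((\<lambda>y. arccos (tt y)) has_derivative (\<lambda>h. (vv y \<bullet> h) * inverse (- sqrt (1 - (tt y)\<^sup>2)))) (at y)"
    using diff_chain_at[OF tt_deriv[OF assms(1)] a] by (simp add: o_def)
  then have "((\<lambda>y. c * (R - arccos (tt y))) has_derivative
      (\<lambda>h. c * (0 - (vv y \<bullet> h) * inverse (- sqrt (1 - (tt y)\<^sup>2))))) (at y)"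
    by (rule has_derivative_mult_right[OF has_derivative_diff[OF has_derivative_const]])
  then show ?thesis unfolding hom0_uc
    by (rule has_derivative_eq_rhs) (auto simp: gg_def field_simps)
qed

lemma tt_sphere: "norm \<xi> = 1 \<Longrightarrow> tt \<xi> = north \<bullet> \<xi>"
  by (simp add: tt_def)

lemma tt_normalize: "x \<noteq> 0 \<Longrightarrow> tt (x /\<^sub>R norm x) = tt x"
  by (simp add: tt_def divide_inverse_commute)

lemma arccos_lt_iff:
  assumes "0 < R" "R < pi" "\<bar>t\<bar> \<le> 1"
  shows "arccos t < R \<longleftrightarrow> cos R < t"
proof -
  have "cos R < cos (arccos t) \<longleftrightarrow> arccos t < R"
    using assms arccos_lbound arccos_ubound by (intro cos_mono_less_eq) auto
  then show ?thesis using assms by (simp add: cos_arccos_abs)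
qed

lemma arccos_le_iff:
  assumes "0 < R" "R < pi" "\<bar>t\<bar> \<le> 1"
  shows "arccos t \<le> R \<longleftrightarrow> cos R \<le> t"
proof -
  have "cos R \<le> cos (arccos t) \<longleftrightarrow> arccos t \<le> R"
    using assms arccos_lbound arccos_ubound by (intro cos_mono_le_eq) auto
  then show ?thesis using assms by (simp add: cos_arccos_abs)
qed

lemma cap_tt_bounds:
  assumes "R < pi" "\<xi> \<in> cap R" "\<xi> \<noteq> north"
  shows "-1 < tt \<xi> \<and> tt \<xi> < 1"
proof -
  have n: "norm \<xi> = 1" and d: "arccos (north \<bullet> \<xi>) \<le> R"
    using assms(2) by (auto simp: cap_def sph_dist_def)
  have b: "\<bar>north \<bullet> \<xi>\<bar> \<le> 1" using inner_north_le[OF n] .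
  have "north \<bullet> \<xi> \<noteq> 1" using inner_north_eq1[OF n] assms(3) by blast
  moreover have "north \<bullet> \<xi> \<noteq> -1" using d assms(1) by auto
  ultimately show ?thesis using b tt_sphere[OF n] by auto
qed

lemma sgrad_uc_ge:
  assumes "norm \<xi> = 1" "-1 < tt \<xi>" "tt \<xi> < 1" "0 \<le> c"
  shows "c \<le> sgrad_norm (uc R c) \<xi>"
proof -
  have x0: "\<xi> \<noteq> 0" using assms(1) by auto
  have fd: "frechet_derivative (hom0 (uc R c)) (at \<xi>) = (\<lambda>h. gg c \<xi> \<bullet> h)"
    using frechet_derivative_at[OF uc_deriv[OF x0 assms(2,3)]] by simp
  define t where "t = tt \<xi>"
  have t: "t = north \<bullet> \<xi>" using tt_sphere[OF assms(1)] t_def by simp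
  have v: "vv \<xi> = north - t *\<^sub>R \<xi>" using assms(1) by (simp add: vv_def t)
  have ii: "\<xi> \<bullet> \<xi> = 1" "north \<bullet> north = 1" using assms(1)
    by (simp_all add: norm_eq_1[symmetric])
  have vv2: "vv \<xi> \<bullet> vv \<xi> = 1 - t\<^sup>2"
    unfolding v using ii t by (simp add: inner_diff_left inner_diff_right inner_commute power2_eq_square)
  define s where "s = sqrt (1 - t\<^sup>2)"
  have t1: "t\<^sup>2 < 1" using assms(2,3) t_def abs_square_less_1 by fastforce
  have s0: "0 < s" unfolding s_def using t1 by simp
  have ss: "s * s = 1 - t\<^sup>2" unfolding s_def using t1 real_sqrt_mult_self[of "1 - t\<^sup>2"] by simp
  have nv: "norm (vv \<xi>) = s"
    using vv2 s_def by (simp add: norm_eq_sqrt_inner)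
  have "gg c \<xi> \<bullet> vv \<xi> = (c / s) * (vv \<xi> \<bullet> vv \<xi>)"
    unfolding gg_def s_def t_def by simp
  also have "\<dots> = (c / s) * (s * s)" using vv2 ss by simp
  also have "\<dots> = c * s" using s0 by simp
  finally have gv: "gg c \<xi> \<bullet> vv \<xi> = c * s" .
  have bl: "bounded_linear (\<lambda>h. gg c \<xi> \<bullet> h)" by (rule bounded_linear_inner_right)
  have "c * s \<le> onorm (\<lambda>h. gg c \<xi> \<bullet> h) * s"
    using onorm[OF bl, of "vv \<xi>"] gv nv assms(4) s0 by simp
  then show ?thesis unfolding sgrad_norm_def fd using s0 by simp
qed

lemma W_props:
  assumes "R < pi" "x \<in> open_cone (open_cap R - {north})"
  shows "x \<noteq> 0 \<and> -1 < tt x \<and> tt x < 1"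
proof -
  have x0: "x \<noteq> 0" and xi: "x /\<^sub>R norm x \<in> open_cap R" "x /\<^sub>R norm x \<noteq> north"
    using assms(2) by (auto simp: open_cone_def)
  have "x /\<^sub>R norm x \<in> cap R" using xi(1) by (auto simp: open_cap_def cap_def)
  from cap_tt_bounds[OF assms(1) this xi(2)] show ?thesis
    using tt_normalize[OF x0] x0 by simp
qed

lemma uc_adm:
  assumes "0 < R" "R < pi" "0 \<le> c"
  shows "uc R c \<in> admissible R"
proof -
  have nn: "\<forall>\<xi>\<in>cap R. 0 \<le> uc R c \<xi>" using assms(3)
    by (auto simp: cap_def uc_def)
  have bd: "\<forall>\<xi>\<in>cap_boundary R. uc R c \<xi> = 0"
    by (auto simp: cap_boundary_def uc_def)
  have "\<forall>x\<in>cap R. - 1 \<le> north \<bullet> x \<and> north \<bullet> x \<le> 1"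
    using inner_north_le by (fastforce simp: cap_def abs_le_iff)
  then have ct: "continuous_on (cap R) (uc R c)"
    unfolding uc_def sph_dist_def by (intro continuous_intros) auto
  define W where "W = open_cone (open_cap R - {north})"
  have Wp: "\<And>x. x \<in> W \<Longrightarrow> x \<noteq> 0 \<and> -1 < tt x \<and> tt x < 1"
    using W_props[OF assms(2)] W_def by blast
  have der: "\<forall>x\<in>W. (hom0 (uc R c) has_derivative (\<lambda>h. gg c x \<bullet> h)) (at x)"
    using Wp uc_deriv by blast
  have sq: "\<And>x. x \<in> W \<Longrightarrow> sqrt (1 - (north \<bullet> x / norm x)\<^sup>2) \<noteq> 0"
  proof -
    fix x assume "x \<in> W"
    then have "-1 < tt x" "tt x < 1" using Wp by auto
    then have "(tt x)\<^sup>2 < 1" using abs_square_less_1 by fastforce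
    then show "sqrt (1 - (north \<bullet> x / norm x)\<^sup>2) \<noteq> 0" by (simp add: tt_def)
  qed
  have cg: "continuous_on W (gg c)"
    unfolding gg_def vv_def tt_def
    by (intro continuous_intros) (use Wp sq in auto)
  have neg: "negligible (open_cone {north})"
    using negligible_subset[OF _ ray_sub] span_null
    by (metis closed_span borel_closed negligible_iff_null_sets null_sets_completionI)
  have pw: "piecewise_C1_cap R (uc R c)"
    unfolding piecewise_C1_cap_def
    using ct der cg neg W_def by (intro conjI exI[of _ "{north}"]) (auto simp: north_def)
  show ?thesis unfolding admissible_def using nn bd pw by blast
qed

lemma R2_uc_le:
  assumes "0 < R" "R < pi" "0 \<le> c"
  shows "R2 R (uc R c) \<le> ennreal (3 * (1 / (1 + c\<^sup>2)) * measure lborel (cball (0::real^3) 1))"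
proof -
  let ?f = "\<lambda>\<xi>. exp (- 2 * uc R c \<xi>) / (1 + (sgrad_norm (uc R c) \<xi>)\<^sup>2)"
  let ?S = "ball_sector (cap R)"
  let ?a = "1 / (1 + c\<^sup>2)"
  have pt: "ennreal (?f (x /\<^sub>R norm x)) * indicator ?S x \<le> ennreal ?a * indicator (cball 0 1) x"
    if nr: "x \<notin> open_cone {north}" for x
  proof (cases "x \<in> ?S")
    case False then show ?thesis by simp
  next
    case True
    define \<xi> where "\<xi> = x /\<^sub>R norm x"
    have x0: "x \<noteq> 0" and xn: "norm x \<le> 1" and xc: "\<xi> \<in> cap R"
      using True by (auto simp: ball_sector_def \<xi>_def)
    have "\<xi> \<noteq> north" using nr x0 by (auto simp: open_cone_def \<xi>_def)
    from cap_tt_bounds[OF assms(2) xc this] have tb: "-1 < tt \<xi>" "tt \<xi> < 1" by auto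
    have n1: "norm \<xi> = 1" using xc by (auto simp: cap_def)
    have sg: "c \<le> sgrad_norm (uc R c) \<xi>" using sgrad_uc_ge[OF n1 tb assms(3)] .
    have "c\<^sup>2 \<le> (sgrad_norm (uc R c) \<xi>)\<^sup>2" using sg assms(3) by (intro power_mono) auto
    moreover have "0 \<le> uc R c \<xi>" using xc assms(3) by (auto simp: cap_def uc_def)
    then have "exp (- 2 * uc R c \<xi>) \<le> 1" by simp
    ultimately have "?f \<xi> \<le> ?a"
      by (intro frac_le) (auto simp: add_pos_nonneg)
    then show ?thesis using True xn \<xi>_def by (auto simp: indicator_def)
  qed
  have "(\<integral>\<^sup>+ x \<in> ?S. ennreal (?f (x /\<^sub>R norm x)) \<partial>lborel) \<le>
        (\<integral>\<^sup>+ x \<in> cball (0::real^3) 1. ennreal ?a \<partial>lborel)"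
    apply (rule nn_integral_mono_AE)
    using AE_not_ray by eventually_elim (rule pt)
  also have "\<dots> = ennreal ?a * emeasure lborel (cball (0::real^3) 1)"
    by (rule nn_integral_cmult_indicator) simp
  also have "\<dots> = ennreal (?a * measure lborel (cball (0::real^3) 1))"
  proof -
    have e: "emeasure lborel (cball (0::real^3) 1) = ennreal (measure lborel (cball (0::real^3) 1))"
      using emeasure_lborel_cball_finite[of "0::real^3" 1] by (intro emeasure_eq_ennreal_measure) auto
    show ?thesis unfolding e by (rule ennreal_mult[symmetric]) auto
  qed
  finally have "R2 R (uc R c) \<le> 3 * ennreal (?a * measure lborel (cball (0::real^3) 1))"
    unfolding R2_def sphere_nn_integral_def by (intro mult_left_mono) auto
  also have "\<dots> = ennreal 3 * ennreal (?a * measure lborel (cball (0::real^3) 1))"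
    by simp
  also have "\<dots> = ennreal (3 * (?a * measure lborel (cball (0::real^3) 1)))"
    by (rule ennreal_mult[symmetric]) auto
  also have "\<dots> = ennreal (3 * ?a * measure lborel (cball (0::real^3) 1))"
    by (simp only: mult.assoc)
  finally show ?thesis .
qed

lemma INF_R2_zero:
  assumes "0 < R" "R < pi"
  shows "(INF u \<in> admissible R. R2 R u) = 0"
proof (rule antisym)
  show "(INF u \<in> admissible R. R2 R u) \<le> 0"
  proof (rule ennreal_le_epsilon)
    fix e :: real assume e: "0 < e"
    define m where "m = measure lborel (cball (0::real^3) 1)"
    have m0: "0 \<le> m" unfolding m_def by simp
    define c where "c = 3 * m / e + 1"
    have c1: "1 \<le> c" unfolding c_def using m0 e by simp
    have "c \<le> c\<^sup>2" using c1 by (simp add: power2_eq_square)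
    have ec: "e * c = 3 * m + e" unfolding c_def using e by (simp add: field_simps)
    have "3 * m \<le> e * (1 + c\<^sup>2)"
    proof -
      have h: "e * c \<le> e * c\<^sup>2" using \<open>c \<le> c\<^sup>2\<close> e by (intro mult_left_mono) auto
      have "3 * m \<le> e + e * c\<^sup>2" using h ec e by linarith
      then show ?thesis by (simp add: distrib_left)
    qed
    then have le: "3 * (1 / (1 + c\<^sup>2)) * m \<le> e"
      by (simp add: field_simps add_pos_nonneg)
    have "(INF u \<in> admissible R. R2 R u) \<le> R2 R (uc R c)"
      using uc_adm[OF assms, of c] c1 by (intro INF_lower) auto
    also have "\<dots> \<le> ennreal (3 * (1 / (1 + c\<^sup>2)) * m)"
      unfolding m_def using R2_uc_le[OF assms, of c] c1 by simp
    also have "\<dots> \<le> ennreal e" using le by (rule ennreal_leI)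
    finally show "(INF u \<in> admissible R. R2 R u) \<le> 0 + ennreal e" by simp
  qed
qed simp

lemma open_cone_open:
  assumes "0 < R" "R < pi" "closed Z"
  shows "open (open_cone (open_cap R - Z))"
proof -
  define Opn where "Opn = {\<xi>::real^3. cos R < north \<bullet> \<xi>} - Z"
  have oO: "open Opn" unfolding Opn_def using assms(3)
    by (intro open_Diff open_Collect_less continuous_intros) auto
  have eq: "open_cone (open_cap R - Z) = (- {0}) \<inter> (\<lambda>x. x /\<^sub>R norm x) -` Opn"
  proof (intro set_eqI iffI)
    fix x assume "x \<in> open_cone (open_cap R - Z)"
    then have x0: "x \<noteq> 0" and xi: "x /\<^sub>R norm x \<in> open_cap R" "x /\<^sub>R norm x \<notin> Z"
      by (auto simp: open_cone_def)
    have n1: "norm (x /\<^sub>R norm x) = 1" using x0 by simp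
    have "arccos (north \<bullet> (x /\<^sub>R norm x)) < R" using xi(1) by (simp add: open_cap_def sph_dist_def)
    then have "cos R < north \<bullet> (x /\<^sub>R norm x)"
      using arccos_lt_iff[OF assms(1,2) inner_north_le[OF n1]] by simp
    then show "x \<in> (- {0}) \<inter> (\<lambda>x. x /\<^sub>R norm x) -` Opn" using x0 xi(2) by (simp add: Opn_def)
  next
    fix x assume a: "x \<in> (- {0}) \<inter> (\<lambda>x. x /\<^sub>R norm x) -` Opn"
    then have x0: "x \<noteq> 0" and c: "cos R < north \<bullet> (x /\<^sub>R norm x)" and z: "x /\<^sub>R norm x \<notin> Z"
      by (auto simp: Opn_def)
    have n1: "norm (x /\<^sub>R norm x) = 1" using x0 by simp
    have "arccos (north \<bullet> (x /\<^sub>R norm x)) < R"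
      using arccos_lt_iff[OF assms(1,2) inner_north_le[OF n1]] c by simp
    then show "x \<in> open_cone (open_cap R - Z)" using x0 z n1
      by (simp add: open_cone_def open_cap_def sph_dist_def)
  qed
  have "continuous_on (- {0}) (\<lambda>x::real^3. x /\<^sub>R norm x)"
    by (intro continuous_intros) auto
  then show ?thesis unfolding eq using oO
    by (intro continuous_open_preimage) auto
qed

lemma one_plus_sq_ne: "1 + (a::real)\<^sup>2 \<noteq> 0"
proof -
  have "0 \<le> a\<^sup>2" by simp
  then show ?thesis by linarith
qed

lemma R2_pos:
  assumes "0 < R" "R < pi" "u \<in> admissible R"
  shows "0 < R2 R u"
proof -
  have cu: "continuous_on (cap R) u" and pw: "piecewise_C1_cap R u"
    using assms(3) by (auto simp: admissible_def piecewise_C1_cap_def)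
  from pw obtain Z g where Zc: "closed Z" and Zn: "negligible (open_cone Z)"
    and der: "\<forall>x \<in> open_cone (open_cap R - Z). (hom0 u has_derivative (\<lambda>h. g x \<bullet> h)) (at x)"
    and cg: "continuous_on (open_cone (open_cap R - Z)) g"
    unfolding piecewise_C1_cap_def by blast
  define W where "W = open_cone (open_cap R - Z)"
  have oW: "open W" unfolding W_def by (rule open_cone_open[OF assms(1,2) Zc])
  define V where "V = open_cone (open_cap R - {})"
  have oV: "open V" unfolding V_def by (rule open_cone_open[OF assms(1,2)]) simp
  have "north \<in> V" unfolding V_def open_cone_def open_cap_def sph_dist_def
    using assms(1) by (simp add: north_def)
  then have "\<not> negligible V" using oV open_not_negligible by blast
  then have "\<not> V \<subseteq> open_cone Z" using Zn negligible_subset by blast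
  then obtain x0 where "x0 \<in> V" "x0 \<notin> open_cone Z" by blast
  then have x0W: "x0 \<in> W" unfolding V_def W_def open_cone_def by auto
  define y0 where "y0 = (1/2) *\<^sub>R (x0 /\<^sub>R norm x0)"
  have x00: "x0 \<noteq> 0" using x0W by (auto simp: W_def open_cone_def)
  have ny0: "norm y0 = 1/2" unfolding y0_def using x00 by simp
  have "y0 /\<^sub>R norm y0 = 2 *\<^sub>R y0" unfolding ny0 by simp
  also have "\<dots> = x0 /\<^sub>R norm x0" unfolding y0_def by simp
  finally have yx: "y0 /\<^sub>R norm y0 = x0 /\<^sub>R norm x0" .
  have y00: "y0 \<noteq> 0" using ny0 by auto
  have y0W: "y0 \<in> W" using x0W y00 unfolding W_def open_cone_def mem_Collect_eq yx by simp
  obtain r where r0: "0 < r" and rb: "ball y0 r \<subseteq> W"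
    using oW y0W open_contains_ball by blast
  define r' where "r' = min (r/2) (1/4)"
  have r'0: "0 < r'" using r0 by (simp add: r'_def)
  define K where "K = cball y0 r'"
  have KW: "K \<subseteq> W" unfolding K_def using rb r0 by (auto simp: r'_def)
  have Knorm: "1/4 \<le> norm x \<and> norm x \<le> 1" if "x \<in> K" for x
  proof -
    have "dist y0 x \<le> 1/4" using that by (auto simp: K_def r'_def)
    then have "norm (y0 - x) \<le> 1/4" by (simp add: dist_norm)
    moreover have "norm x \<le> norm y0 + norm (x - y0)" by (rule norm_triangle_sub)
    moreover have "norm y0 \<le> norm x + norm (y0 - x)" by (rule norm_triangle_sub)
    moreover have "norm (x - y0) = norm (y0 - x)" by (rule norm_minus_commute)
    ultimately show ?thesis using ny0 by linarith
  qed
  have K0: "x \<noteq> 0" if "x \<in> K" for x using Knorm[OF that] by auto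
  have KS: "x /\<^sub>R norm x \<in> open_cap R - Z" if "x \<in> K" for x
    using KW that by (auto simp: W_def open_cone_def)
  have Kcap: "x /\<^sub>R norm x \<in> cap R" if "x \<in> K" for x
    using KS[OF that] by (auto simp: open_cap_def cap_def)
  have KW2: "x /\<^sub>R norm x \<in> W" if "x \<in> K" for x
    using KS[OF that] K0[OF that] by (auto simp: W_def open_cone_def)
  define \<phi> where "\<phi> = (\<lambda>x. exp (- 2 * u (x /\<^sub>R norm x)) / (1 + (norm (g (x /\<^sub>R norm x)))\<^sup>2))"
  have cn: "continuous_on K (\<lambda>x. x /\<^sub>R norm x)"
    by (intro continuous_intros) (use K0 in auto)
  have c1: "continuous_on K (\<lambda>x. u (x /\<^sub>R norm x))"
    by (rule continuous_on_compose2[OF cu cn]) (use Kcap in auto)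
  have c2: "continuous_on K (\<lambda>x. g (x /\<^sub>R norm x))"
    by (rule continuous_on_compose2[OF cg[folded W_def] cn]) (use KW2 in auto)
  have cphi: "continuous_on K \<phi>" unfolding \<phi>_def
    by (intro continuous_intros c1 c2) (auto simp: one_plus_sq_ne)
  have "compact K" "K \<noteq> {}" using r'0 by (auto simp: K_def)
  from continuous_attains_inf[OF this cphi] obtain xm where xm: "xm \<in> K" "\<forall>y\<in>K. \<phi> xm \<le> \<phi> y"
    by blast
  define c0 where "c0 = \<phi> xm"
  have c0pos: "0 < c0" unfolding c0_def \<phi>_def by (simp add: add_pos_nonneg)
  let ?f = "\<lambda>\<xi>. exp (- 2 * u \<xi>) / (1 + (sgrad_norm u \<xi>)\<^sup>2)"
  have fge: "c0 \<le> ?f (x /\<^sub>R norm x)" if "x \<in> K" for x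
  proof -
    define \<xi> where "\<xi> = x /\<^sub>R norm x"
    have "\<xi> \<in> W" using KW2[OF that] \<xi>_def by simp
    then have fd: "frechet_derivative (hom0 u) (at \<xi>) = (\<lambda>h. g \<xi> \<bullet> h)"
      using frechet_derivative_at der W_def by metis
    have bl: "bounded_linear (\<lambda>h. g \<xi> \<bullet> h)" by (rule bounded_linear_inner_right)
    have sg0: "0 \<le> sgrad_norm u \<xi>" unfolding sgrad_norm_def fd by (rule onorm_pos_le[OF bl])
    have sg1: "sgrad_norm u \<xi> \<le> norm (g \<xi>)" unfolding sgrad_norm_def fd
      by (rule onorm_le) (simp add: Cauchy_Schwarz_ineq2)
    have "(sgrad_norm u \<xi>)\<^sup>2 \<le> (norm (g \<xi>))\<^sup>2" using sg0 sg1 by (intro power_mono) auto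
    then have "\<phi> x \<le> ?f \<xi>" unfolding \<phi>_def \<xi>_def[symmetric]
      by (intro divide_left_mono) (auto simp: add_pos_nonneg)
    moreover have "c0 \<le> \<phi> x" using xm that c0_def by auto
    ultimately show ?thesis using \<xi>_def by simp
  qed
  have KS2: "K \<subseteq> ball_sector (cap R)"
    using K0 Knorm Kcap by (auto simp: ball_sector_def)
  have "ennreal c0 * emeasure lborel K = (\<integral>\<^sup>+ x \<in> K. ennreal c0 \<partial>lborel)"
    by (rule nn_integral_cmult_indicator[symmetric]) (simp add: K_def)
  also have "\<dots> \<le> (\<integral>\<^sup>+ x \<in> ball_sector (cap R). ennreal (?f (x /\<^sub>R norm x)) \<partial>lborel)"
    by (rule nn_integral_mono) (use KS2 fge in \<open>auto simp: indicator_def\<close>)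
  finally have le: "ennreal c0 * emeasure lborel K \<le> (\<integral>\<^sup>+ x \<in> ball_sector (cap R). ennreal (?f (x /\<^sub>R norm x)) \<partial>lborel)" .
  have "emeasure lborel K = ennreal (unit_ball_vol (real DIM(real^3)) * r' ^ DIM(real^3))"
    unfolding K_def using r'0 by (intro emeasure_cball) simp
  moreover have "0 < unit_ball_vol (real DIM(real^3)) * r' ^ DIM(real^3)"
    using r'0 by simp
  ultimately have "0 < emeasure lborel K" by simp
  then have "0 < ennreal c0 * emeasure lborel K" using c0pos
    by (simp add: ennreal_zero_less_mult_iff)
  then have "0 < (\<integral>\<^sup>+ x \<in> ball_sector (cap R). ennreal (?f (x /\<^sub>R norm x)) \<partial>lborel)"
    using le by (rule less_le_trans)
  then show ?thesis unfolding R2_def sphere_nn_integral_def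
    by (simp add: ennreal_zero_less_mult_iff)
qed

theorem proposition3p5:
  fixes R :: real
  assumes "0 < R" and "R < pi"
  shows "(INF u \<in> admissible R. R2 R u) = 0 \<and>
         \<not> (\<exists>u \<in> admissible R. \<forall>v \<in> admissible R. R2 R u \<le> R2 R v)"
proof
  show i: "(INF u \<in> admissible R. R2 R u) = 0" using INF_R2_zero[OF assms] .
  show "\<not> (\<exists>u \<in> admissible R. \<forall>v \<in> admissible R. R2 R u \<le> R2 R v)"
  proof
    assume "\<exists>u \<in> admissible R. \<forall>v \<in> admissible R. R2 R u \<le> R2 R v"
    then obtain u where u: "u \<in> admissible R" "\<forall>v \<in> admissible R. R2 R u \<le> R2 R v" by blast
    then have "R2 R u \<le> (INF v \<in> admissible R. R2 R v)" by (intro INF_greatest) auto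
    then have "R2 R u \<le> 0" using i by simp
    moreover have "0 < R2 R u" using R2_pos[OF assms u(1)] .
    ultimately show False by simp
  qed
qed

end
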